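(* Let $P,Q_0,Q_1$ be probability measures with $Q_1\perp P$, and let $0\le\epsilon\le1$. Then $$H^2(P,(1-\epsilon)Q_0+\epsilon Q_1)=2(1-\sqrt{1-\epsilon})+\sqrt{1-\epsilon}\,H^2(P,Q_0),$$ and $$\frac14\le\frac{H^2(P,(1-\epsilon)Q_0+\epsilon Q_1)}{\epsilon\vee H^2(P,Q_0)}\le4.$$
   Context: $H^2(P,Q)=\int(\sqrt{dP}-\sqrt{dQ})^2$ is the squared Hellinger distance. $Q_1\perp P$ means there is a measurable set $A$ with $Q_1(A)=1$ and $P(A)=0$. $a\vee b=\max(a,b)$. *)

theory Defs
  imports "HOL-Probability.Probability"
begin

definition mix_measure :: "ennreal \<Rightarrow> 'a measure \<Rightarrow> ennreal \<Rightarrow> 'a measure \<Rightarrow> 'a measure" where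
  "mix_measure a M b N =
     measure_of (space M) (sets M) (\<lambda>A. a * emeasure M A + b * emeasure N A)"

text \<open>Squared Hellinger distance  H^2(P,Q) = \<integral> (sqrt dP - sqrt dQ)^2, computed
  with respect to the dominating measure P + Q, densities given by Radon-Nikodym derivatives.\<close>
definition hellinger_sq :: "'a measure \<Rightarrow> 'a measure \<Rightarrow> real" where
  "hellinger_sq P Q =
     (let \<nu> = mix_measure 1 P 1 Q in
      enn2real (\<integral>\<^sup>+ x. ennreal ((sqrt (enn2real (RN_deriv \<nu> P x))
                                   - sqrt (enn2real (RN_deriv \<nu> Q x)))\<^sup>2) \<partial>\<nu>))"

end

theory Submission
  imports Defs
begin


lemma emeasure_mix:
  assumes "sets N = sets M" "A \<in> sets M"
  shows "emeasure (mix_measure a M b N) A = a * emeasure M A + b * emeasure N A"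
  unfolding mix_measure_def
proof (rule emeasure_measure_of_sigma)
  show "sigma_algebra (space M) (sets M)" ..
  show "positive (sets M) (\<lambda>A. a * emeasure M A + b * emeasure N A)"
    by (simp add: positive_def)
  show "countably_additive (sets M) (\<lambda>A. a * emeasure M A + b * emeasure N A)"
    unfolding countably_additive_def
  proof (intro allI impI)
    fix F :: "nat \<Rightarrow> 'a set"
    assume h: "range F \<subseteq> sets M" "disjoint_family F"
    have h2: "range F \<subseteq> sets N" using h assms by simp
    show "(\<Sum>i. a * emeasure M (F i) + b * emeasure N (F i)) = a * emeasure M (\<Union> (range F)) + b * emeasure N (\<Union> (range F))"
      using suminf_emeasure[OF h] suminf_emeasure[OF h2 h(2)]
      by (simp add: suminf_add[symmetric])
  qed
qed (fact assms)

lemma sets_mix[simp]: "sets (mix_measure a M b N) = sets M"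
  unfolding mix_measure_def by (simp add: sets.space_closed)

lemma space_mix[simp]: "space (mix_measure a M b N) = space M"
  unfolding mix_measure_def by (simp add: sets.space_closed)

lemma mix_density:
  assumes [measurable]: "f \<in> borel_measurable \<mu>" "g \<in> borel_measurable \<mu>"
  shows "mix_measure a (density \<mu> f) b (density \<mu> g) = density \<mu> (\<lambda>x. a * f x + b * g x)"
proof (rule measure_eqI)
  fix A assume "A \<in> sets (mix_measure a (density \<mu> f) b (density \<mu> g))"
  then have A[measurable]: "A \<in> sets \<mu>" by simp
  show "emeasure (mix_measure a (density \<mu> f) b (density \<mu> g)) A = emeasure (density \<mu> (\<lambda>x. a * f x + b * g x)) A"
    using A
    by (simp add: emeasure_mix emeasure_density nn_integral_add nn_integral_cmult distrib_right mult.assoc)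
qed simp



lemma pt_ident:
  fixes p q :: real assumes "0 \<le> p" "0 \<le> q"
  shows "(p + q) * (sqrt (p / (p + q)) - sqrt (q / (p + q)))\<^sup>2 = (sqrt p - sqrt q)\<^sup>2"
proof (cases "p + q = 0")
  case True then have "p = 0" "q = 0" using assms by auto
  then show ?thesis by simp
next
  case False
  then have pos: "p + q > 0" using assms by auto
  have "(sqrt (p / (p + q)) - sqrt (q / (p + q)))\<^sup>2 = (sqrt p - sqrt q)\<^sup>2 / (p + q)"
    using pos by (simp add: real_sqrt_divide diff_divide_distrib[symmetric] power_divide)
  then show ?thesis using pos by simp
qed

lemma hellinger_density:
  fixes p q :: "'a \<Rightarrow> real"
  assumes pm[measurable]: "p \<in> borel_measurable \<mu>" and qm[measurable]: "q \<in> borel_measurable \<mu>"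
    and p0: "\<And>x. 0 \<le> p x" and q0: "\<And>x. 0 \<le> q x"
    and ip: "integrable \<mu> p" and iq: "integrable \<mu> q"
  shows "hellinger_sq (density \<mu> (\<lambda>x. ennreal (p x))) (density \<mu> (\<lambda>x. ennreal (q x)))
     = enn2real (\<integral>\<^sup>+ x. ennreal ((sqrt (p x) - sqrt (q x))\<^sup>2) \<partial>\<mu>)"
proof -
  define \<nu> where "\<nu> = density \<mu> (\<lambda>x. ennreal (p x + q x))"
  have nu: "mix_measure 1 (density \<mu> (\<lambda>x. ennreal (p x))) 1 (density \<mu> (\<lambda>x. ennreal (q x))) = \<nu>"
    unfolding \<nu>_def by (subst mix_density) (auto simp: p0 q0 ennreal_plus)
  have sets_nu[simp]: "sets \<nu> = sets \<mu>" "space \<nu> = space \<mu>" unfolding \<nu>_def by auto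
  have "integrable \<mu> (\<lambda>x. p x + q x)" using ip iq by auto
  then have "(\<integral>\<^sup>+ x. ennreal (p x + q x) \<partial>\<mu>) < \<infinity>"
    by (simp add: integrable_iff_bounded add_nonneg_nonneg p0 q0)
  then have "emeasure \<nu> (space \<nu>) \<noteq> \<infinity>"
    unfolding \<nu>_def by (simp add: emeasure_density)
  then interpret nu: finite_measure \<nu> by (rule finite_measureI)
  have RN: "AE x in \<nu>. enn2real (RN_deriv \<nu> (density \<mu> (\<lambda>x. ennreal (f x))) x) = f x / (p x + q x)"
    if fm[measurable]: "f \<in> borel_measurable \<mu>" and f0: "\<And>x. 0 \<le> f x" and fle: "\<And>x. f x \<le> p x + q x" for f
  proof -
    have "density \<nu> (\<lambda>x. ennreal (f x / (p x + q x))) = density \<mu> (\<lambda>x. ennreal (f x))"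
      unfolding \<nu>_def
    proof (subst density_density_eq)
      show "density \<mu> (\<lambda>x. ennreal (p x + q x) * ennreal (f x / (p x + q x))) = density \<mu> (\<lambda>x. ennreal (f x))"
      proof (rule density_cong)
        show "AE x in \<mu>. ennreal (p x + q x) * ennreal (f x / (p x + q x)) = ennreal (f x)"
        proof (rule AE_I2)
          fix x
          have "(p x + q x) * (f x / (p x + q x)) = f x"
            using fle[of x] f0[of x] p0[of x] q0[of x] by (cases "p x + q x = 0") auto
          moreover have "ennreal (p x + q x) * ennreal (f x / (p x + q x)) = ennreal ((p x + q x) * (f x / (p x + q x)))"
            using p0[of x] q0[of x] f0[of x] by (intro ennreal_mult[symmetric]) auto
          ultimately show "ennreal (p x + q x) * ennreal (f x / (p x + q x)) = ennreal (f x)"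
            by simp
        qed
      qed auto
    qed auto
    from nu.RN_deriv_unique[OF _ this] have
      "AE x in \<nu>. ennreal (f x / (p x + q x)) = RN_deriv \<nu> (density \<mu> (\<lambda>x. ennreal (f x))) x"
      unfolding measurable_cong_sets[OF sets_nu(1) refl] by measurable
    then show ?thesis
      by (rule AE_mp) (auto intro!: AE_I2 simp: f0 p0 q0 dest: sym[where t="RN_deriv _ _ _"])
  qed
  have "(\<integral>\<^sup>+ x. ennreal ((sqrt (enn2real (RN_deriv \<nu> (density \<mu> (\<lambda>x. ennreal (p x))) x))
              - sqrt (enn2real (RN_deriv \<nu> (density \<mu> (\<lambda>x. ennreal (q x))) x)))\<^sup>2) \<partial>\<nu>)
     = (\<integral>\<^sup>+ x. ennreal ((sqrt (p x / (p x + q x)) - sqrt (q x / (p x + q x)))\<^sup>2) \<partial>\<nu>)"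
  proof (rule nn_integral_cong_AE)
    have a: "\<And>x. p x \<le> p x + q x" "\<And>x. q x \<le> p x + q x" using p0 q0 by auto
    show "AE x in \<nu>. ennreal ((sqrt (enn2real (RN_deriv \<nu> (density \<mu> (\<lambda>x. ennreal (p x))) x))
              - sqrt (enn2real (RN_deriv \<nu> (density \<mu> (\<lambda>x. ennreal (q x))) x)))\<^sup>2) =
          ennreal ((sqrt (p x / (p x + q x)) - sqrt (q x / (p x + q x)))\<^sup>2)"
      using RN[OF pm p0 a(1)] RN[OF qm q0 a(2)] by eventually_elim simp
  qed
  also have "\<dots> = (\<integral>\<^sup>+ x. ennreal (p x + q x) * ennreal ((sqrt (p x / (p x + q x)) - sqrt (q x / (p x + q x)))\<^sup>2) \<partial>\<mu>)"
    unfolding \<nu>_def by (rule nn_integral_density) auto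
  also have "\<dots> = (\<integral>\<^sup>+ x. ennreal ((sqrt (p x) - sqrt (q x))\<^sup>2) \<partial>\<mu>)"
  proof (rule nn_integral_cong)
    fix x
    have "ennreal (p x + q x) * ennreal ((sqrt (p x / (p x + q x)) - sqrt (q x / (p x + q x)))\<^sup>2)
       = ennreal ((p x + q x) * (sqrt (p x / (p x + q x)) - sqrt (q x / (p x + q x)))\<^sup>2)"
      using p0[of x] q0[of x] by (intro ennreal_mult[symmetric]) auto
    then show "ennreal (p x + q x) * ennreal ((sqrt (p x / (p x + q x)) - sqrt (q x / (p x + q x)))\<^sup>2)
       = ennreal ((sqrt (p x) - sqrt (q x))\<^sup>2)"
      using pt_ident[OF p0[of x] q0[of x]] by simp
  qed
  finally show ?thesis unfolding hellinger_sq_def Let_def nu by simp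
qed



lemma dens_rep:
  assumes fm: "finite_measure \<mu>" and ps: "prob_space P" and se: "sets P = sets \<mu>"
    and ac: "absolutely_continuous \<mu> P"
  obtains p where "p \<in> borel_measurable \<mu>" "\<And>x. 0 \<le> p x" "integrable \<mu> p"
    "P = density \<mu> (\<lambda>x. ennreal (p x))" "integral\<^sup>L \<mu> p = 1"
proof -
  interpret finite_measure \<mu> by fact
  interpret P: prob_space P by fact
  define p where "p x = enn2real (RN_deriv \<mu> P x)" for x
  have pm[measurable]: "p \<in> borel_measurable \<mu>" unfolding p_def by measurable
  have dens: "density \<mu> (RN_deriv \<mu> P) = P" by (rule density_RN_deriv) (fact ac, fact se)
  have fin: "AE x in \<mu>. RN_deriv \<mu> P x \<noteq> \<infinity>"
    by (rule RN_deriv_finite) (auto simp: ac se P.sigma_finite_measure_axioms)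
  have eq0: "density \<mu> (RN_deriv \<mu> P) = density \<mu> (\<lambda>x. ennreal (p x))"
  proof (rule density_cong)
    show "AE x in \<mu>. RN_deriv \<mu> P x = ennreal (p x)"
      using fin by eventually_elim (simp add: p_def ennreal_enn2real_if)
  qed auto
  have eq: "P = density \<mu> (\<lambda>x. ennreal (p x))" using eq0 dens by simp
  have sp: "space P = space \<mu>" using se by (rule sets_eq_imp_space_eq)
  have "1 = emeasure P (space P)" by (simp add: P.emeasure_space_1)
  also have "\<dots> = emeasure (density \<mu> (\<lambda>x. ennreal (p x))) (space \<mu>)"
    unfolding sp by (subst eq) (rule refl)
  also have "\<dots> = (\<integral>\<^sup>+ x. ennreal (p x) * indicator (space \<mu>) x \<partial>\<mu>)"
    by (rule emeasure_density) auto
  also have "\<dots> = (\<integral>\<^sup>+ x. ennreal (p x) \<partial>\<mu>)"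
    by (rule nn_integral_cong) simp
  finally have one: "(\<integral>\<^sup>+ x. ennreal (p x) \<partial>\<mu>) = 1" by simp
  have p0: "\<And>x. 0 \<le> p x" by (simp add: p_def)
  have int: "integrable \<mu> p" by (rule integrableI_nonneg[OF pm AE_I2]) (simp_all add: one p0)
  have "integral\<^sup>L \<mu> p = 1"
  proof -
    have "integral\<^sup>L \<mu> p = enn2real (\<integral>\<^sup>+ x. ennreal (p x) \<partial>\<mu>)"
      by (rule integral_eq_nn_integral[OF pm]) (simp add: p0)
    then show ?thesis using one by simp
  qed
  show ?thesis by (rule that[OF pm p0 int eq \<open>integral\<^sup>L \<mu> p = 1\<close>])
qed



lemma arith_bound:
  fixes e h :: real
  assumes "0 \<le> e" "e \<le> 1" "0 \<le> h" "h \<le> 2" "max e h > 0"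
  shows "1/4 \<le> (2 * (1 - sqrt (1 - e)) + sqrt (1 - e) * h) / max e h
       \<and> (2 * (1 - sqrt (1 - e)) + sqrt (1 - e) * h) / max e h \<le> 4"
proof -
  define s where "s = sqrt (1 - e)"
  have s0: "0 \<le> s" and s1: "s \<le> 1" using assms unfolding s_def by auto
  have ss: "s * s = 1 - e" using assms unfolding s_def by (simp add: real_sqrt_mult_self)
  have l1: "e \<le> 2 * (1 - s)"
  proof -
    have "e = (1 - s) * (1 + s)" using ss by (simp add: algebra_simps)
    also have "\<dots> \<le> (1 - s) * 2" using s0 s1 by (intro mult_left_mono) auto
    finally show ?thesis by simp
  qed
  have l2: "1 - s \<le> e"
  proof -
    have "e = (1 - s) * (1 + s)" using ss by (simp add: algebra_simps)
    moreover have "(1 - s) * 1 \<le> (1 - s) * (1 + s)" using s0 s1 by (intro mult_left_mono) auto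
    ultimately show ?thesis by simp
  qed
  have shh: "s * h \<le> 1 * h" using s1 assms by (intro mult_right_mono) auto
  have sh0: "0 \<le> s * h" using s0 assms by simp
  let ?H = "2 * (1 - s) + s * h"
  let ?m = "max e h"
  have mpos: "?m > 0" by fact
  have up: "?H \<le> 4 * ?m" using l2 shh assms by (auto simp: max_def)
  have lo: "?m \<le> 4 * ?H"
  proof (cases "e \<ge> h")
    case True then show ?thesis using l1 sh0 assms by (simp add: max_def)
  next
    case False
    then have m: "?m = h" by simp
    show ?thesis
    proof (cases "e \<le> 3/4")
      case True
      then have "s * s \<ge> (1/2) * (1/2)" using ss by simp
      have "s \<ge> 1/2"
      proof (rule ccontr)
        assume "\<not> s \<ge> 1/2"
        then have "s < 1/2" by simp
        then have "s * s \<le> s * (1/2)" using s0 by (intro mult_left_mono) auto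
        then show False using \<open>s < 1/2\<close> \<open>s * s \<ge> (1/2) * (1/2)\<close> by linarith
      qed
      then have "(1/2) * h \<le> s * h" using assms by (intro mult_right_mono) auto
      then have "h / 2 \<le> s * h" by simp
      then have "h \<le> 8 - 8 * s + 4 * (s * h)" using l1 assms s1 by linarith
      then show ?thesis unfolding m by (simp add: algebra_simps)
    next
      case False
      have "4 * e \<le> 8 - 8 * s" using l1 by simp
      then have "h \<le> 8 - 8 * s + 4 * (s * h)" using False sh0 assms by linarith
      then show ?thesis unfolding m by (simp add: algebra_simps)
    qed
  qed
  show ?thesis unfolding s_def[symmetric] using up lo mpos
    by (simp add: le_divide_eq divide_le_eq)
qed



lemma null_density:
  fixes f :: "'a \<Rightarrow> real"
  assumes [measurable]: "f \<in> borel_measurable \<mu>" "A \<in> sets \<mu>" and f0: "\<And>x. 0 \<le> f x"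
    and z: "emeasure (density \<mu> (\<lambda>x. ennreal (f x))) A = 0"
  shows "AE x in \<mu>. x \<in> A \<longrightarrow> f x = 0"
proof -
  have "(\<integral>\<^sup>+ x. ennreal (f x) * indicator A x \<partial>\<mu>) = 0"
    using z by (simp add: emeasure_density)
  then have "AE x in \<mu>. ennreal (f x) * indicator A x = 0"
    by (subst (asm) nn_integral_0_iff_AE) auto
  then show ?thesis by eventually_elim (auto simp: f0)
qed

lemma sq_le: fixes a b :: real assumes "0 \<le> a" "0 \<le> b"
  shows "(sqrt a - sqrt b)\<^sup>2 \<le> a + b"
proof -
  have "(sqrt a - sqrt b)\<^sup>2 = a + b - 2 * (sqrt a * sqrt b)"
    using assms by (simp add: power2_diff)
  moreover have "0 \<le> sqrt a * sqrt b" using assms by simp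
  ultimately show ?thesis by linarith
qed

lemma key_ident:
  fixes p q0 q1 e :: real
  assumes "0 \<le> p" "0 \<le> q0" "0 \<le> q1" "0 \<le> e" "e \<le> 1" "p = 0 \<or> q1 = 0"
  shows "(sqrt p - sqrt ((1-e)*q0 + e*q1))\<^sup>2
     = (1 - sqrt (1-e)) * p + ((1-e)*q0 + e*q1) - sqrt (1-e) * q0 + sqrt (1-e) * (sqrt p - sqrt q0)\<^sup>2"
proof (cases "p = 0")
  case True
  have "0 \<le> (1-e)*q0 + e*q1" using assms by simp
  then show ?thesis using True assms by simp
next
  case False
  then have q1: "q1 = 0" using assms by simp
  define s where "s = sqrt (1 - e)"
  have ss: "s * s = 1 - e" "0 \<le> s" using assms unfolding s_def by (auto simp: real_sqrt_mult_self)
  have m: "sqrt ((1-e)*q0 + e*q1) = s * sqrt q0"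
    using q1 assms by (simp add: s_def real_sqrt_mult)
  define a where "a = sqrt p"
  define b where "b = sqrt q0"
  have pa: "p = a^2" "q0 = b^2" using assms unfolding a_def b_def by auto
  have mm: "(1-e)*q0 + e*q1 = s * s * b^2" using q1 ss pa by simp
  have sb: "sqrt (s * s * b^2) = s * b" using ss assms unfolding b_def
    by (simp add: real_sqrt_mult s_def)
  have alg: "(a - s * b)^2 = (1-s)*a^2 + s * s * b^2 - s * b^2 + s * (a-b)^2"
    by (simp add: algebra_simps power2_eq_square)
  show ?thesis unfolding m s_def[symmetric] a_def[symmetric] b_def[symmetric] mm
    using alg pa sb by simp
qed



theorem lemma7:
  fixes P Q0 Q1 :: "'a measure" and \<epsilon> :: real
  assumes "prob_space P" and "prob_space Q0" and "prob_space Q1"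
    and "sets Q0 = sets P" and "sets Q1 = sets P"
    and "\<exists>A\<in>sets P. emeasure Q1 A = 1 \<and> emeasure P A = 0"
    and "0 \<le> \<epsilon>" and "\<epsilon> \<le> 1"
  shows "(hellinger_sq P (mix_measure (ennreal (1 - \<epsilon>)) Q0 (ennreal \<epsilon>) Q1)
           = 2 * (1 - sqrt (1 - \<epsilon>)) + sqrt (1 - \<epsilon>) * hellinger_sq P Q0)
         \<and> (max \<epsilon> (hellinger_sq P Q0) > 0 \<longrightarrow>
           (1/4 \<le> hellinger_sq P (mix_measure (ennreal (1 - \<epsilon>)) Q0 (ennreal \<epsilon>) Q1)
                   / max \<epsilon> (hellinger_sq P Q0)
         \<and> hellinger_sq P (mix_measure (ennreal (1 - \<epsilon>)) Q0 (ennreal \<epsilon>) Q1)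
                   / max \<epsilon> (hellinger_sq P Q0) \<le> 4))"
proof -
  interpret P: prob_space P by fact
  interpret Q0: prob_space Q0 by fact
  interpret Q1: prob_space Q1 by fact
  have s0: "sets Q0 = sets P" and s1: "sets Q1 = sets P" by fact+
  have sp0: "space Q0 = space P" and sp1: "space Q1 = space P"
    using sets_eq_imp_space_eq[OF s0] sets_eq_imp_space_eq[OF s1] by auto
  define N where "N = mix_measure 1 Q0 1 Q1"
  define \<mu> where "\<mu> = mix_measure 1 P 1 N"
  have sN: "sets N = sets P" using s0 by (simp add: N_def)
  have s\<mu>: "sets \<mu> = sets P" by (simp add: \<mu>_def)
  have sp\<mu>: "space \<mu> = space P" by (simp add: \<mu>_def)
  have em: "emeasure \<mu> A = emeasure P A + (emeasure Q0 A + emeasure Q1 A)" if A: "A \<in> sets P" for A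
  proof -
    have "emeasure N A = emeasure Q0 A + emeasure Q1 A"
      unfolding N_def using A s0 s1 by (subst emeasure_mix) auto
    then show ?thesis unfolding \<mu>_def using A sN by (subst emeasure_mix) auto
  qed
  have "emeasure \<mu> (space \<mu>) = 3"
    using em[of "space P"] sp\<mu> sp0 sp1 P.emeasure_space_1 Q0.emeasure_space_1 Q1.emeasure_space_1
    by simp
  then have fm: "finite_measure \<mu>" by (intro finite_measureI) simp
  have nul: "emeasure P A = 0 \<and> emeasure Q0 A = 0 \<and> emeasure Q1 A = 0" if "A \<in> null_sets \<mu>" for A
  proof -
    have A: "A \<in> sets P" "emeasure \<mu> A = 0" using that s\<mu> by (auto simp: null_sets_def)
    then show ?thesis using em[OF A(1)] by simp
  qed
  have acP: "absolutely_continuous \<mu> P" unfolding absolutely_continuous_def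
    using nul s\<mu> by auto
  have ac0: "absolutely_continuous \<mu> Q0" unfolding absolutely_continuous_def
  proof
    fix A assume "A \<in> null_sets \<mu>"
    then show "A \<in> null_sets Q0" using nul[of A] s\<mu> s0 by (auto simp: null_sets_def)
  qed
  have ac1: "absolutely_continuous \<mu> Q1" unfolding absolutely_continuous_def
  proof
    fix A assume "A \<in> null_sets \<mu>"
    then show "A \<in> null_sets Q1" using nul[of A] s\<mu> s1 by (auto simp: null_sets_def)
  qed
  obtain p where pm[measurable]: "p \<in> borel_measurable \<mu>" and p0: "\<And>x. 0 \<le> p x"
    and ip: "integrable \<mu> p" and Pe: "P = density \<mu> (\<lambda>x. ennreal (p x))" and p1: "integral\<^sup>L \<mu> p = 1"
    using dens_rep[OF fm assms(1) s\<mu>[symmetric] acP] by blast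
  obtain q0 where q0m[measurable]: "q0 \<in> borel_measurable \<mu>" and q00: "\<And>x. 0 \<le> q0 x"
    and iq0: "integrable \<mu> q0" and Q0e: "Q0 = density \<mu> (\<lambda>x. ennreal (q0 x))" and q01: "integral\<^sup>L \<mu> q0 = 1"
    using dens_rep[OF fm assms(2) _ ac0] s0 s\<mu> by metis
  obtain q1 where q1m[measurable]: "q1 \<in> borel_measurable \<mu>" and q10: "\<And>x. 0 \<le> q1 x"
    and iq1: "integrable \<mu> q1" and Q1e: "Q1 = density \<mu> (\<lambda>x. ennreal (q1 x))" and q11: "integral\<^sup>L \<mu> q1 = 1"
    using dens_rep[OF fm assms(3) _ ac1] s1 s\<mu> by metis
  define m where "m x = (1 - \<epsilon>) * q0 x + \<epsilon> * q1 x" for x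
  have mm[measurable]: "m \<in> borel_measurable \<mu>" unfolding m_def by measurable
  have m0: "\<And>x. 0 \<le> m x" unfolding m_def using q00 q10 assms(7,8) by simp
  have im: "integrable \<mu> m" unfolding m_def using iq0 iq1 by simp
  have m1: "integral\<^sup>L \<mu> m = 1" unfolding m_def using iq0 iq1 q01 q11 by simp
  have Qe: "mix_measure (ennreal (1 - \<epsilon>)) Q0 (ennreal \<epsilon>) Q1 = density \<mu> (\<lambda>x. ennreal (m x))"
  proof -
    have "mix_measure (ennreal (1 - \<epsilon>)) Q0 (ennreal \<epsilon>) Q1
       = mix_measure (ennreal (1 - \<epsilon>)) (density \<mu> (\<lambda>x. ennreal (q0 x))) (ennreal \<epsilon>) (density \<mu> (\<lambda>x. ennreal (q1 x)))"
      using Q0e Q1e by simp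
    also have "\<dots> = density \<mu> (\<lambda>x. ennreal (1 - \<epsilon>) * ennreal (q0 x) + ennreal \<epsilon> * ennreal (q1 x))"
      by (rule mix_density) auto
    also have "\<dots> = density \<mu> (\<lambda>x. ennreal (m x))"
    proof (rule density_cong)
      show "AE x in \<mu>. ennreal (1 - \<epsilon>) * ennreal (q0 x) + ennreal \<epsilon> * ennreal (q1 x) = ennreal (m x)"
      proof (rule AE_I2)
        fix x
        have a: "0 \<le> 1 - \<epsilon>" "0 \<le> \<epsilon>" using assms(7,8) by auto
        have "ennreal (m x) = ennreal ((1 - \<epsilon>) * q0 x) + ennreal (\<epsilon> * q1 x)"
          unfolding m_def by (rule ennreal_plus) (use a q00 q10 in auto)
        also have "\<dots> = ennreal (1 - \<epsilon>) * ennreal (q0 x) + ennreal \<epsilon> * ennreal (q1 x)"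
          using a q00[of x] q10[of x] by (simp add: ennreal_mult)
        finally show "ennreal (1 - \<epsilon>) * ennreal (q0 x) + ennreal \<epsilon> * ennreal (q1 x) = ennreal (m x)" by simp
      qed
    qed auto
    finally show ?thesis .
  qed
  define g0 where "g0 x = (sqrt (p x) - sqrt (q0 x))\<^sup>2" for x
  define gm where "gm x = (sqrt (p x) - sqrt (m x))\<^sup>2" for x
  have g0m[measurable]: "g0 \<in> borel_measurable \<mu>" unfolding g0_def by measurable
  have gmm[measurable]: "gm \<in> borel_measurable \<mu>" unfolding gm_def by measurable
  have H0: "hellinger_sq P Q0 = integral\<^sup>L \<mu> g0"
    unfolding Pe Q0e
    by (subst hellinger_density[OF pm q0m p0 q00 ip iq0], rule enn2real_nn_integral_eq_integral)
       (auto simp: g0_def)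
  have Hm: "hellinger_sq P (mix_measure (ennreal (1 - \<epsilon>)) Q0 (ennreal \<epsilon>) Q1) = integral\<^sup>L \<mu> gm"
    unfolding Qe unfolding Pe
    by (subst hellinger_density[OF pm mm p0 m0 ip im], rule enn2real_nn_integral_eq_integral)
       (auto simp: gm_def)
  have ig0: "integrable \<mu> g0"
  proof (rule Bochner_Integration.integrable_bound[of _ "\<lambda>x. p x + q0 x"])
    show "integrable \<mu> (\<lambda>x. p x + q0 x)" using ip iq0 by simp
    show "AE x in \<mu>. norm (g0 x) \<le> norm (p x + q0 x)"
      using p0 q00 sq_le by (auto simp: g0_def)
  qed auto
  obtain A where A: "A \<in> sets P" "emeasure Q1 A = 1" "emeasure P A = 0" using assms(6) by blast
  have Aa: "AE x in \<mu>. x \<in> A \<longrightarrow> p x = 0"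
    using A s\<mu> by (intro null_density[OF pm _ p0]) (auto simp: Pe[symmetric])
  have "emeasure Q1 (space Q1 - A) = 0"
    using A s1 by (subst emeasure_compl) (auto simp: Q1.emeasure_space_1)
  then have Ab: "AE x in \<mu>. x \<in> space \<mu> - A \<longrightarrow> q1 x = 0"
    using A s\<mu> sp1 sp\<mu> by (intro null_density[OF q1m _ q10]) (auto simp: Q1e[symmetric])
  have orth: "AE x in \<mu>. p x = 0 \<or> q1 x = 0"
    using Aa Ab AE_space by eventually_elim auto
  define s where "s = sqrt (1 - \<epsilon>)"
  have ident: "AE x in \<mu>. gm x = (1 - s) * p x + m x - s * q0 x + s * g0 x"
    using orth by eventually_elim
      (simp add: gm_def g0_def m_def s_def key_ident[OF p0 q00 q10 assms(7,8)])
  have "integral\<^sup>L \<mu> gm = integral\<^sup>L \<mu> (\<lambda>x. (1 - s) * p x + m x - s * q0 x + s * g0 x)"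
    by (rule integral_cong_AE) (auto simp: ident)
  also have "\<dots> = (1 - s) * integral\<^sup>L \<mu> p + integral\<^sup>L \<mu> m - s * integral\<^sup>L \<mu> q0 + s * integral\<^sup>L \<mu> g0"
    using ip im iq0 ig0 by simp
  finally have main: "integral\<^sup>L \<mu> gm = 2 * (1 - s) + s * integral\<^sup>L \<mu> g0"
    using p1 m1 q01 by simp
  have h0: "0 \<le> integral\<^sup>L \<mu> g0" by (rule integral_nonneg_AE) (auto simp: g0_def)
  have h2: "integral\<^sup>L \<mu> g0 \<le> 2"
  proof -
    have "integral\<^sup>L \<mu> g0 \<le> integral\<^sup>L \<mu> (\<lambda>x. p x + q0 x)"
      using ig0 ip iq0 p0 q00 sq_le by (intro integral_mono) (auto simp: g0_def)
    also have "\<dots> = 2" using ip iq0 p1 q01 by simp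
    finally show ?thesis .
  qed
  have eq1: "hellinger_sq P (mix_measure (ennreal (1 - \<epsilon>)) Q0 (ennreal \<epsilon>) Q1)
           = 2 * (1 - sqrt (1 - \<epsilon>)) + sqrt (1 - \<epsilon>) * hellinger_sq P Q0"
    using main Hm H0 by (simp add: s_def)
  show ?thesis
    using eq1 arith_bound[OF assms(7,8) h0 h2] unfolding H0[symmetric] by simp
qed

end
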